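(* Let $g:\{0,1\}^n\to\{0,1\}^{n+1}$ be a super-bit, and define $f(x)=g(x)[1\ldots n]$ and $b(x)=g(x)[n+1]$ (so $g(x)=f(x)b(x)$). Then $b$ is a super-core of $f$, and $f$ is computable by polynomial-size circuits.
   Context: $U_k$ is uniform on $\{0,1\}^k$. A generator $g:\{0,1\}^n\to\{0,1\}^{n+1}$ computable by polynomial-size circuits is a super-bit if for every nondeterministic polynomial-size circuit family $D$ (accepting iff some witness gives output 1), every polynomial $p$ and all sufficiently large $n$, $\Pr[D(U_{n+1})=1]-\Pr[D(g(U_n))=1]<1/p(n)$. A predicate $b$ computable by polynomial-size circuits is a super-core of $f:\{0,1\}^n\to\{0,1\}^{m(n)}$ if there do not exist a nondeterministic polynomial-size circuit family $\mathcal{A}_1$, a co-nondeterministic polynomial-size circuit family $\mathcal{A}_2$ (rejecting iff some witness gives output 0), a polynomial $p$ and infinitely many $n$ such that either $\Pr_{x\in\{0,1\}^n}[\mathcal{A}_1(f(x),1^n)=b(x)=0]+\tfrac12\Pr_{y\in\{0,1\}^{m(n)}}[\mathcal{A}_1(y,1^n)=1]\ge \tfrac12+\tfrac1{p(n)}$ or $\Pr_{x}[\mathcal{A}_2(f(x),1^n)=b(x)=1]+\tfrac12\Pr_{y}[\mathcal{A}_2(y,1^n)=0]\ge \tfrac12+\tfrac1{p(n)}$. *)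

theory Defs
  imports Complex_Main "HOL-Computational_Algebra.Polynomial"
begin

text \<open>Wires 0..k-1 are the k input bits; the i-th gate produces wire k+i and may only
  read earlier wires (reading a nonexistent wire yields False).\<close>

datatype gate = GConst bool | GNot nat | GAnd nat nat | GOr nat nat

record circuit =
  gates :: "gate list"
  outs  :: "nat list"

definition wire :: "bool list \<Rightarrow> nat \<Rightarrow> bool" where
  "wire ws i = (if i < length ws then ws ! i else False)"

fun eval_gate :: "bool list \<Rightarrow> gate \<Rightarrow> bool" where
  "eval_gate ws (GConst c) = c"
| "eval_gate ws (GNot i) = (\<not> wire ws i)"
| "eval_gate ws (GAnd i j) = (wire ws i \<and> wire ws j)"
| "eval_gate ws (GOr i j) = (wire ws i \<or> wire ws j)"

definition eval_circuit :: "circuit \<Rightarrow> bool list \<Rightarrow> bool list" where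
  "eval_circuit C x =
     (let ws = foldl (\<lambda>ws g. ws @ [eval_gate ws g]) x (gates C)
      in map (wire ws) (outs C))"

definition csize :: "circuit \<Rightarrow> nat" where
  "csize C = length (gates C)"

definition out1 :: "circuit \<Rightarrow> bool list \<Rightarrow> bool" where
  "out1 C x = (case eval_circuit C x of [] \<Rightarrow> False | b # _ \<Rightarrow> b)"

definition poly_size :: "(nat \<Rightarrow> circuit) \<Rightarrow> bool" where
  "poly_size C = (\<exists>q :: nat poly. \<forall>k. csize (C k) \<le> poly q k)"

definition poly_computable :: "(bool list \<Rightarrow> bool list) \<Rightarrow> bool" where
  "poly_computable h = (\<exists>C. poly_size C \<and> (\<forall>x. eval_circuit (C (length x)) x = h x))"

definition poly_computable_pred :: "(bool list \<Rightarrow> bool) \<Rightarrow> bool" where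
  "poly_computable_pred b = poly_computable (\<lambda>x. [b x])"

text \<open>A nondeterministic circuit family: for input length k, a witness length and a
  circuit reading input followed by witness. Polynomial size bounds witness length plus gates.\<close>
type_synonym nd_family = "nat \<Rightarrow> nat \<times> circuit"

definition nd_poly_size :: "nd_family \<Rightarrow> bool" where
  "nd_poly_size D = (\<exists>q :: nat poly. \<forall>k. fst (D k) + csize (snd (D k)) \<le> poly q k)"

definition nd_accepts :: "nd_family \<Rightarrow> bool list \<Rightarrow> bool" where
  "nd_accepts D x = (\<exists>w. length w = fst (D (length x)) \<and> out1 (snd (D (length x))) (x @ w))"

definition cond_accepts :: "nd_family \<Rightarrow> bool list \<Rightarrow> bool" where
  "cond_accepts D x = (\<forall>w. length w = fst (D (length x)) \<longrightarrow> out1 (snd (D (length x))) (x @ w))"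

definition prob_unif :: "nat \<Rightarrow> (bool list \<Rightarrow> bool) \<Rightarrow> real" where
  "prob_unif k P = real (card {x. length x = k \<and> P x}) / 2 ^ k"

definition super_bit :: "(bool list \<Rightarrow> bool list) \<Rightarrow> bool" where
  "super_bit g \<longleftrightarrow>
     (\<forall>x. length (g x) = Suc (length x)) \<and> poly_computable g \<and>
     (\<forall>D. nd_poly_size D \<longrightarrow>
        (\<forall>p :: nat poly. p \<noteq> 0 \<longrightarrow>
           (\<forall>\<^sub>F n in sequentially.
              prob_unif (Suc n) (nd_accepts D) - prob_unif n (\<lambda>x. nd_accepts D (g x))
                < 1 / real (poly p n))))"

text \<open>b is a super-core of f : {0,1}^n -> {0,1}^(m n). The input (y, 1^n) is encoded
  as the string y followed by n ones; families are indexed by total input length.\<close>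
definition super_core ::
  "(bool list \<Rightarrow> bool) \<Rightarrow> (bool list \<Rightarrow> bool list) \<Rightarrow> (nat \<Rightarrow> nat) \<Rightarrow> bool" where
  "super_core b f m \<longleftrightarrow> poly_computable_pred b \<and>
     \<not> (\<exists>A1 A2 (p :: nat poly). nd_poly_size A1 \<and> nd_poly_size A2 \<and> p \<noteq> 0 \<and>
          (\<exists>\<^sub>F n in sequentially.
             prob_unif n (\<lambda>x. \<not> nd_accepts A1 (f x @ replicate n True) \<and> \<not> b x)
               + 1/2 * prob_unif (m n) (\<lambda>y. nd_accepts A1 (y @ replicate n True))
               \<ge> 1/2 + 1 / real (poly p n)
           \<or> prob_unif n (\<lambda>x. cond_accepts A2 (f x @ replicate n True) \<and> b x)
               + 1/2 * prob_unif (m n) (\<lambda>y. \<not> cond_accepts A2 (y @ replicate n True))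
               \<ge> 1/2 + 1 / real (poly p n)))"

end

theory Submission
  imports Defs
begin


fun shg :: "nat \<Rightarrow> gate \<Rightarrow> gate" where
  "shg k (GConst c) = GConst c"
| "shg k (GNot i) = GNot (i + k)"
| "shg k (GAnd i j) = GAnd (i + k) (j + k)"
| "shg k (GOr i j) = GOr (i + k) (j + k)"

definition run :: "gate list \<Rightarrow> bool list \<Rightarrow> bool list" where
  "run gs ws = foldl (\<lambda>ws g. ws @ [eval_gate ws g]) ws gs"

lemma run_Nil[simp]: "run [] ws = ws" by (simp add: run_def)
lemma run_Cons[simp]: "run (g # gs) ws = run gs (ws @ [eval_gate ws g])" by (simp add: run_def)
lemma run_append: "run (a @ b) ws = run b (run a ws)" by (simp add: run_def)

lemma run_length[simp]: "length (run gs ws) = length ws + length gs"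
  by (induction gs arbitrary: ws) auto

lemma wire_shift: "length pre = k \<Longrightarrow> wire (pre @ z) (i + k) = wire z i"
  by (auto simp: wire_def nth_append)

lemma wire_lt: "i < length ws \<Longrightarrow> wire (ws @ v) i = wire ws i"
  by (auto simp: wire_def nth_append)

lemma eval_shift: "length pre = k \<Longrightarrow> eval_gate (pre @ z) (shg k g) = eval_gate z g"
  by (cases g) (auto simp: wire_shift)

lemma run_shift: "length pre = k \<Longrightarrow> run (map (shg k) gs) (pre @ z) = pre @ run gs z"
proof (induction gs arbitrary: z)
  case Nil then show ?case by simp
next
  case (Cons g gs)
  have "run (map (shg k) (g # gs)) (pre @ z) = run (map (shg k) gs) (pre @ (z @ [eval_gate z g]))"
    using eval_shift[OF Cons.prems] by simp
  also have "\<dots> = pre @ run (g # gs) z" using Cons by simp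
  finally show ?case .
qed

lemma run_copy: "\<forall>i\<in>set js. i < length ws \<Longrightarrow> run (map (\<lambda>i. GAnd i i) js) ws = ws @ map (wire ws) js"
proof (induction js arbitrary: ws)
  case Nil then show ?case by simp
next
  case (Cons i js)
  have "run (map (\<lambda>i. GAnd i i) (i # js)) ws = run (map (\<lambda>i. GAnd i i) js) (ws @ [wire ws i])" by simp
  also have "\<dots> = (ws @ [wire ws i]) @ map (wire (ws @ [wire ws i])) js"
  proof -
    have "\<forall>j\<in>set js. j < length (ws @ [wire ws i])" using Cons.prems by auto
    from Cons.IH[OF this] show ?thesis .
  qed
  also have "map (wire (ws @ [wire ws i])) js = map (wire ws) js"
    using Cons.prems by (auto simp: wire_lt)
  finally show ?case by simp
qed

lemma run_const: "run (replicate m (GConst True)) ws = ws @ replicate m True"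
  by (induction m arbitrary: ws) auto

definition pre_gates :: "nat \<Rightarrow> nat \<Rightarrow> gate list" where
  "pre_gates n wl = map (\<lambda>i. GAnd i i) [0..<n] @ replicate n (GConst True)
      @ map (\<lambda>i. GAnd i i) [Suc n..<Suc n + wl]"

lemma length_pre_gates[simp]: "length (pre_gates n wl) = n + n + wl"
  by (simp add: pre_gates_def)

lemma run_pre: assumes "length y = n" "length w = wl"
  shows "run (pre_gates n wl) (y @ c # w) = (y @ c # w) @ (y @ replicate n True @ w)"
proof -
  let ?x = "y @ c # w"
  have m1: "map (wire ?x) [0..<n] = y"
    by (rule nth_equalityI) (auto simp: assms wire_def nth_append)
  have r1: "run (map (\<lambda>i. GAnd i i) [0..<n]) ?x = ?x @ y"
    using run_copy[of "[0..<n]" ?x] m1 assms by auto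
  have r2: "run (replicate n (GConst True)) (?x @ y) = ?x @ y @ replicate n True"
    by (simp add: run_const)
  have m3: "map (wire (?x @ y @ replicate n True)) [Suc n..<Suc n + wl] = w"
  proof (rule nth_equalityI)
    fix i assume "i < length (map (wire (?x @ y @ replicate n True)) [Suc n..<Suc n + wl])"
    then have i: "i < wl" by (simp del: upt_Suc)
    have "(?x @ y @ replicate n True) ! (Suc n + i) = ?x ! (Suc n + i)"
      using i assms by (simp add: nth_append)
    also have "\<dots> = w ! i" using assms by (simp add: nth_append)
    finally show "map (wire (?x @ y @ replicate n True)) [Suc n..<Suc n + wl] ! i = w ! i"
      using i assms by (simp add: wire_def del: upt_Suc)
  qed (simp add: assms)
  have r3: "run (map (\<lambda>i. GAnd i i) [Suc n..<Suc n + wl]) (?x @ y @ replicate n True)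
       = (?x @ y @ replicate n True) @ w"
    using run_copy[of "[Suc n..<Suc n + wl]" "?x @ y @ replicate n True"] m3 assms by auto
  show ?thesis unfolding pre_gates_def run_append r1 r2 r3 by simp
qed

definition outidx :: "circuit \<Rightarrow> nat \<Rightarrow> nat" where
  "outidx C L = (case outs C of [] \<Rightarrow> L + length (gates C) | k # _ \<Rightarrow> k)"

lemma out1_run: "length z = L \<Longrightarrow> out1 C z = wire (run (gates C) z) (outidx C L)"
  by (auto simp: out1_def eval_circuit_def run_def[symmetric] outidx_def wire_def split: list.splits)

definition build1 :: "nat \<Rightarrow> nat \<Rightarrow> circuit \<Rightarrow> circuit" where
  "build1 n wl C = \<lparr>gates = pre_gates n wl @ map (shg (Suc n + wl)) (gates C)
       @ [GOr (outidx C (n + n + wl) + (Suc n + wl)) n],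
     outs = [Suc n + wl + (n + n + wl) + length (gates C)]\<rparr>"

definition build2 :: "nat \<Rightarrow> nat \<Rightarrow> circuit \<Rightarrow> circuit" where
  "build2 n wl C = \<lparr>gates = pre_gates n wl @ map (shg (Suc n + wl)) (gates C)
       @ [GAnd (outidx C (n + n + wl) + (Suc n + wl)) n,
          GNot (Suc n + wl + (n + n + wl) + length (gates C))],
     outs = [Suc (Suc n + wl + (n + n + wl) + length (gates C))]\<rparr>"

lemma build1_out: assumes "length y = n" "length w = wl"
  shows "out1 (build1 n wl C) (y @ c # w) \<longleftrightarrow> out1 C (y @ replicate n True @ w) \<or> c"
proof -
  let ?x = "y @ c # w" and ?z = "y @ replicate n True @ w"
  let ?ws = "run (gates C) ?z"
  have lx: "length ?x = Suc n + wl" using assms by simp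
  have lz: "length ?z = n + n + wl" using assms by simp
  have "run (gates (build1 n wl C)) ?x = (?x @ ?ws) @ [wire (?x @ ?ws) (outidx C (n + n + wl) + (Suc n + wl)) \<or> wire (?x @ ?ws) n]"
    unfolding build1_def using run_pre[OF assms, of c] run_shift[OF lx] by (simp add: run_append)
  moreover have "wire (?x @ ?ws) (outidx C (n + n + wl) + (Suc n + wl)) = out1 C ?z"
    using wire_shift[OF lx] out1_run[OF lz] by simp
  moreover have "wire (?x @ ?ws) n = c" using assms by (simp add: wire_def nth_append)
  ultimately show ?thesis using assms
    by (simp add: out1_def eval_circuit_def run_def[symmetric] build1_def wire_def nth_append)
qed

lemma build2_out: assumes "length y = n" "length w = wl"
  shows "out1 (build2 n wl C) (y @ c # w) \<longleftrightarrow> \<not> (out1 C (y @ replicate n True @ w) \<and> c)"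
proof -
  let ?x = "y @ c # w" and ?z = "y @ replicate n True @ w"
  let ?ws = "run (gates C) ?z"
  let ?v = "wire (?x @ ?ws) (outidx C (n + n + wl) + (Suc n + wl)) \<and> wire (?x @ ?ws) n"
  have lx: "length ?x = Suc n + wl" using assms by simp
  have lz: "length ?z = n + n + wl" using assms by simp
  have "run (gates (build2 n wl C)) ?x = (?x @ ?ws) @ [?v, \<not> ?v]"
    unfolding build2_def using run_pre[OF assms, of c] run_shift[OF lx] assms
    by (simp add: run_append wire_def nth_append)
  moreover have "wire (?x @ ?ws) (outidx C (n + n + wl) + (Suc n + wl)) = out1 C ?z"
    using wire_shift[OF lx] out1_run[OF lz] by simp
  moreover have "wire (?x @ ?ws) n = c" using assms by (simp add: wire_def nth_append)
  ultimately show ?thesis using assms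
    by (simp add: out1_def eval_circuit_def run_def[symmetric] build2_def wire_def nth_append)
qed



definition fam1 :: "nd_family \<Rightarrow> nd_family" where
  "fam1 A k = (case k of 0 \<Rightarrow> (0, \<lparr>gates = [], outs = []\<rparr>)
     | Suc n \<Rightarrow> (fst (A (2*n)), build1 n (fst (A (2*n))) (snd (A (2*n)))))"

definition fam2 :: "nd_family \<Rightarrow> nd_family" where
  "fam2 A k = (case k of 0 \<Rightarrow> (0, \<lparr>gates = [], outs = []\<rparr>)
     | Suc n \<Rightarrow> (fst (A (2*n)), build2 n (fst (A (2*n))) (snd (A (2*n)))))"

lemma fam1_acc: "nd_accepts (fam1 A) (y @ [c]) \<longleftrightarrow> nd_accepts A (y @ replicate (length y) True) \<or> c"
proof -
  let ?n = "length y"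
  let ?wl = "fst (A (2 * ?n))"
  have "nd_accepts (fam1 A) (y @ [c]) \<longleftrightarrow>
     (\<exists>w. length w = ?wl \<and> (out1 (snd (A (2 * ?n))) ((y @ replicate ?n True) @ w) \<or> c))"
  proof -
    have key: "\<And>w. length w = ?wl \<Longrightarrow> out1 (build1 ?n ?wl (snd (A (2 * ?n)))) ((y @ [c]) @ w) \<longleftrightarrow> (out1 (snd (A (2 * ?n))) ((y @ replicate ?n True) @ w) \<or> c)"
      using build1_out[of y ?n _ ?wl] by simp
    show ?thesis unfolding nd_accepts_def fam1_def using key by auto
  qed
  also have "\<dots> \<longleftrightarrow> nd_accepts A (y @ replicate ?n True) \<or> c"
    unfolding nd_accepts_def by (auto simp: mult_2 intro: exI[of _ "replicate ?wl False"])
  finally show ?thesis .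
qed

lemma fam2_acc: "nd_accepts (fam2 A) (y @ [c]) \<longleftrightarrow> \<not> cond_accepts A (y @ replicate (length y) True) \<or> \<not> c"
proof -
  let ?n = "length y"
  let ?wl = "fst (A (2 * ?n))"
  have "nd_accepts (fam2 A) (y @ [c]) \<longleftrightarrow>
     (\<exists>w. length w = ?wl \<and> \<not> (out1 (snd (A (2 * ?n))) ((y @ replicate ?n True) @ w) \<and> c))"
  proof -
    have key: "\<And>w. length w = ?wl \<Longrightarrow> out1 (build2 ?n ?wl (snd (A (2 * ?n)))) ((y @ [c]) @ w) \<longleftrightarrow> \<not> (out1 (snd (A (2 * ?n))) ((y @ replicate ?n True) @ w) \<and> c)"
      using build2_out[of y ?n _ ?wl] by simp
    show ?thesis unfolding nd_accepts_def fam2_def using key by auto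
  qed
  also have "\<dots> \<longleftrightarrow> \<not> cond_accepts A (y @ replicate ?n True) \<or> \<not> c"
    unfolding cond_accepts_def by (auto simp: mult_2 intro: exI[of _ "replicate ?wl False"])
  finally show ?thesis .
qed

lemma poly_mono_nat: "(x::nat) \<le> y \<Longrightarrow> poly (p::nat poly) x \<le> poly p y"
  by (induction p) (auto intro!: add_mono mult_mono)

lemma fam_size:
  assumes "nd_poly_size A"
    and "\<And>n. fst (F n) + csize (snd (F n)) \<le> 2 * (fst (A (2*n)) + csize (snd (A (2*n)))) + 2 * n + 2"
    and "fst (F0) + csize (snd F0) = 0"
  shows "nd_poly_size (\<lambda>k. case k of 0 \<Rightarrow> F0 | Suc n \<Rightarrow> F n)"
proof -
  obtain q :: "nat poly" where q: "\<And>k. fst (A k) + csize (snd (A k)) \<le> poly q k"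
    using assms(1) unfolding nd_poly_size_def by blast
  define Q :: "nat poly" where "Q = smult 2 (pcompose q [:0, 2:]) + [:2, 2:]"
  have "\<forall>k. fst (case k of 0 \<Rightarrow> F0 | Suc n \<Rightarrow> F n) + csize (snd (case k of 0 \<Rightarrow> F0 | Suc n \<Rightarrow> F n)) \<le> poly Q k"
  proof
    fix k show "fst (case k of 0 \<Rightarrow> F0 | Suc n \<Rightarrow> F n) + csize (snd (case k of 0 \<Rightarrow> F0 | Suc n \<Rightarrow> F n)) \<le> poly Q k"
    proof (cases k)
      case 0 then show ?thesis using assms(3) by simp
    next
      case (Suc n)
      have "poly q (2*n) \<le> poly q (k*2)" using Suc by (intro poly_mono_nat) simp
      moreover have "poly Q k = 2 * poly q (k*2) + 2 + 2 * k"
        by (simp add: Q_def poly_pcompose algebra_simps) (simp add: mult_2_right)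
      ultimately show ?thesis using Suc assms(2)[of n] q[of "2*n"] by simp
    qed
  qed
  then show ?thesis unfolding nd_poly_size_def by blast
qed

lemma fam1_size: "nd_poly_size A \<Longrightarrow> nd_poly_size (fam1 A)"
proof -
  assume a: "nd_poly_size A"
  have "fam1 A = (\<lambda>k. case k of 0 \<Rightarrow> (0, \<lparr>gates = [], outs = []\<rparr>)
     | Suc n \<Rightarrow> (fst (A (2*n)), build1 n (fst (A (2*n))) (snd (A (2*n)))))"
    by (rule ext) (simp add: fam1_def)
  moreover have "nd_poly_size \<dots>"
    by (rule fam_size[OF a]) (auto simp: csize_def build1_def)
  ultimately show ?thesis by simp
qed

lemma fam2_size: "nd_poly_size A \<Longrightarrow> nd_poly_size (fam2 A)"
proof -
  assume a: "nd_poly_size A"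
  have "fam2 A = (\<lambda>k. case k of 0 \<Rightarrow> (0, \<lparr>gates = [], outs = []\<rparr>)
     | Suc n \<Rightarrow> (fst (A (2*n)), build2 n (fst (A (2*n))) (snd (A (2*n)))))"
    by (rule ext) (simp add: fam2_def)
  moreover have "nd_poly_size \<dots>"
    by (rule fam_size[OF a]) (auto simp: csize_def build2_def)
  ultimately show ?thesis by simp
qed

lemma fin_len: "finite {y :: bool list. length y = n \<and> Q y}"
  by (rule finite_subset[OF _ finite_lists_length_eq[of "UNIV :: bool set" n]]) auto

lemma card_all: "card {y :: bool list. length y = n} = 2 ^ n"
  using card_lists_length_eq[of "UNIV :: bool set" n] by simp

lemma card_compl: "card {x :: bool list. length x = n \<and> P x} + card {x. length x = n \<and> \<not> P x} = 2 ^ n"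
proof -
  have "{x :: bool list. length x = n} = {x. length x = n \<and> P x} \<union> {x. length x = n \<and> \<not> P x}" by auto
  then have "card {x :: bool list. length x = n} = card {x. length x = n \<and> P x} + card {x. length x = n \<and> \<not> P x}"
    by (simp add: card_Un_disjoint fin_len disjoint_iff)
  then show ?thesis using card_all by simp
qed

lemma card_split: "card {z :: bool list. length z = Suc n \<and> P z} =
   card {y. length y = n \<and> P (y @ [True])} + card {y. length y = n \<and> P (y @ [False])}"
proof -
  let ?S1 = "{y. length y = n \<and> P (y @ [True])}" and ?S2 = "{y. length y = n \<and> P (y @ [False])}"
  have eq: "{z :: bool list. length z = Suc n \<and> P z} = (\<lambda>y. y @ [True]) ` ?S1 \<union> (\<lambda>y. y @ [False]) ` ?S2"
  proof (rule set_eqI, rule iffI)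
    fix z :: "bool list" assume "z \<in> {z. length z = Suc n \<and> P z}"
    then have z: "length z = Suc n" "P z" by auto
    then have zz: "z = butlast z @ [last z]"
      by (metis append_butlast_last_id list.size(3) nat.distinct(1))
    show "z \<in> (\<lambda>y. y @ [True]) ` ?S1 \<union> (\<lambda>y. y @ [False]) ` ?S2"
    proof (cases "last z")
      case True
      then have e: "butlast z @ [True] = z" using zz by simp
      have "length (butlast z) = n" using z by simp
      moreover have "P (butlast z @ [True])" using z(2) e by simp
      ultimately have "butlast z \<in> ?S1" by simp
      then have "butlast z @ [True] \<in> (\<lambda>y. y @ [True]) ` ?S1" by (rule imageI)
      then show ?thesis unfolding e by blast
    next
      case False
      then have e: "butlast z @ [False] = z" using zz by simp
      have "length (butlast z) = n" using z by simp
      moreover have "P (butlast z @ [False])" using z(2) e by simp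
      ultimately have "butlast z \<in> ?S2" by simp
      then have "butlast z @ [False] \<in> (\<lambda>y. y @ [False]) ` ?S2" by (rule imageI)
      then show ?thesis unfolding e by blast
    qed
  qed auto
  have "card ((\<lambda>y. y @ [True]) ` ?S1 \<union> (\<lambda>y. y @ [False]) ` ?S2) =
        card ((\<lambda>y. y @ [True]) ` ?S1) + card ((\<lambda>y. y @ [False]) ` ?S2)"
    by (rule card_Un_disjoint) (auto simp: fin_len)
  also have "\<dots> = card ?S1 + card ?S2"
    by (simp add: card_image inj_on_def)
  finally show ?thesis using eq by simp
qed

lemma probU:
  assumes "\<And>y c. length y = n \<Longrightarrow> (P (y @ [c]) \<longleftrightarrow> Q y \<or> c = cz)"
  shows "prob_unif (Suc n) P = 1/2 + 1/2 * prob_unif n Q"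
proof -
  have h1: "\<And>y. length y = n \<Longrightarrow> P (y @ [cz])" using assms by simp
  have h2: "\<And>y. length y = n \<Longrightarrow> P (y @ [\<not> cz]) \<longleftrightarrow> Q y" using assms by simp
  have "card {z :: bool list. length z = Suc n \<and> P z} = 2 ^ n + card {y. length y = n \<and> Q y}"
  proof (cases cz)
    case True
    have a: "\<And>y. length y = n \<Longrightarrow> P (y @ [True])" using h1 True by simp
    have b: "\<And>y. length y = n \<Longrightarrow> P (y @ [False]) \<longleftrightarrow> Q y" using h2 True by simp
    have e1: "{y. length y = n \<and> P (y @ [True])} = {y. length y = n}" using a by auto
    have e2: "{y. length y = n \<and> P (y @ [False])} = {y. length y = n \<and> Q y}" using b by auto
    show ?thesis unfolding card_split[of n P] e1 e2 card_all by simp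
  next
    case False
    have a: "\<And>y. length y = n \<Longrightarrow> P (y @ [False])" using h1 False by simp
    have b: "\<And>y. length y = n \<Longrightarrow> P (y @ [True]) \<longleftrightarrow> Q y" using h2 False by simp
    have e1: "{y. length y = n \<and> P (y @ [False])} = {y. length y = n}" using a by auto
    have e2: "{y. length y = n \<and> P (y @ [True])} = {y. length y = n \<and> Q y}" using b by auto
    show ?thesis unfolding card_split[of n P] e1 e2 card_all by simp
  qed
  then show ?thesis unfolding prob_unif_def by (simp add: field_simps)
qed

lemma probG:
  assumes "\<And>x. length x = n \<Longrightarrow> (P x \<longleftrightarrow> \<not> R x)"
  shows "prob_unif n P = 1 - prob_unif n R"
proof -
  have "{x. length x = n \<and> P x} = {x. length x = n \<and> \<not> R x}" using assms by auto
  then have h: "card {x :: bool list. length x = n \<and> P x} + card {x. length x = n \<and> R x} = 2 ^ n"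
    using card_compl[of n R] by simp
  have "real (card {x :: bool list. length x = n \<and> P x}) + real (card {x. length x = n \<and> R x}) = 2 ^ n"
    using arg_cong[where f = real, OF h] by simp
  then show ?thesis unfolding prob_unif_def by (simp add: field_simps)
qed

lemma split_last: "length xs = Suc n \<Longrightarrow> xs = take n xs @ [xs ! n]"
  by (simp add: take_Suc_conv_app_nth[symmetric])



theorem proposition6p4:
  fixes g :: "bool list \<Rightarrow> bool list"
  assumes "super_bit g"
  shows "super_core (\<lambda>x. g x ! length x) (\<lambda>x. take (length x) (g x)) (\<lambda>n. n)
       \<and> poly_computable (\<lambda>x. take (length x) (g x))"
proof -
  have len: "\<And>x. length (g x) = Suc (length x)" and pc: "poly_computable g"
    and sb: "\<And>D p. nd_poly_size D \<Longrightarrow> p \<noteq> 0 \<Longrightarrow>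
        (\<forall>\<^sub>F n in sequentially.
              prob_unif (Suc n) (nd_accepts D) - prob_unif n (\<lambda>x. nd_accepts D (g x))
                < 1 / real (poly p n))"
    using assms unfolding super_bit_def by blast+
  obtain C where Cs: "poly_size C" and Ce: "\<And>x. eval_circuit (C (length x)) x = g x"
    using pc unfolding poly_computable_def by blast
  have gsplit: "\<And>x. g x = take (length x) (g x) @ [g x ! length x]"
    using len split_last by blast
  have ltake: "\<And>x. length (take (length x) (g x)) = length x" using len by simp
  have pf: "poly_computable (\<lambda>x. take (length x) (g x))"
  proof -
    define C' where "C' k = \<lparr>gates = gates (C k), outs = take k (outs (C k))\<rparr>" for k
    have "poly_size C'" using Cs unfolding poly_size_def C'_def csize_def by simp
    moreover have "eval_circuit (C' (length x)) x = take (length x) (g x)" for x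
      using Ce[of x] unfolding eval_circuit_def C'_def by (simp add: Let_def) (metis take_map)
    ultimately show ?thesis unfolding poly_computable_def by blast
  qed
  have pb: "poly_computable_pred (\<lambda>x. g x ! length x)"
  proof -
    define C' where "C' k = \<lparr>gates = gates (C k), outs = [outs (C k) ! k]\<rparr>" for k
    have "poly_size C'" using Cs unfolding poly_size_def C'_def csize_def by simp
    moreover have "eval_circuit (C' (length x)) x = [g x ! length x]" for x
    proof -
      have "length (eval_circuit (C (length x)) x) = Suc (length x)"
        using Ce[of x] len[of x] by simp
      then have lo: "length (outs (C (length x))) = Suc (length x)"
        by (simp add: eval_circuit_def Let_def)
      have "eval_circuit (C' (length x)) x = [eval_circuit (C (length x)) x ! length x]"
        using lo by (simp add: eval_circuit_def C'_def Let_def)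
      then show ?thesis using Ce[of x] by simp
    qed
    ultimately show ?thesis unfolding poly_computable_pred_def poly_computable_def by blast
  qed
  have nc: "\<not> (\<exists>A1 A2 (p :: nat poly). nd_poly_size A1 \<and> nd_poly_size A2 \<and> p \<noteq> 0 \<and>
          (\<exists>\<^sub>F n in sequentially.
             prob_unif n (\<lambda>x. \<not> nd_accepts A1 (take (length x) (g x) @ replicate n True) \<and> \<not> g x ! length x)
               + 1/2 * prob_unif n (\<lambda>y. nd_accepts A1 (y @ replicate n True))
               \<ge> 1/2 + 1 / real (poly p n)
           \<or> prob_unif n (\<lambda>x. cond_accepts A2 (take (length x) (g x) @ replicate n True) \<and> g x ! length x)
               + 1/2 * prob_unif n (\<lambda>y. \<not> cond_accepts A2 (y @ replicate n True))
               \<ge> 1/2 + 1 / real (poly p n)))"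
  proof
    assume "\<exists>A1 A2 (p :: nat poly). nd_poly_size A1 \<and> nd_poly_size A2 \<and> p \<noteq> 0 \<and>
          (\<exists>\<^sub>F n in sequentially.
             prob_unif n (\<lambda>x. \<not> nd_accepts A1 (take (length x) (g x) @ replicate n True) \<and> \<not> g x ! length x)
               + 1/2 * prob_unif n (\<lambda>y. nd_accepts A1 (y @ replicate n True))
               \<ge> 1/2 + 1 / real (poly p n)
           \<or> prob_unif n (\<lambda>x. cond_accepts A2 (take (length x) (g x) @ replicate n True) \<and> g x ! length x)
               + 1/2 * prob_unif n (\<lambda>y. \<not> cond_accepts A2 (y @ replicate n True))
               \<ge> 1/2 + 1 / real (poly p n))"
    then obtain A1 A2 and p :: "nat poly" where A1: "nd_poly_size A1" and A2: "nd_poly_size A2"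
      and p: "p \<noteq> 0" and fr: "(\<exists>\<^sub>F n in sequentially.
             prob_unif n (\<lambda>x. \<not> nd_accepts A1 (take (length x) (g x) @ replicate n True) \<and> \<not> g x ! length x)
               + 1/2 * prob_unif n (\<lambda>y. nd_accepts A1 (y @ replicate n True))
               \<ge> 1/2 + 1 / real (poly p n)
           \<or> prob_unif n (\<lambda>x. cond_accepts A2 (take (length x) (g x) @ replicate n True) \<and> g x ! length x)
               + 1/2 * prob_unif n (\<lambda>y. \<not> cond_accepts A2 (y @ replicate n True))
               \<ge> 1/2 + 1 / real (poly p n))"
      by blast
    let ?L1 = "\<lambda>n. prob_unif n (\<lambda>x. \<not> nd_accepts A1 (take (length x) (g x) @ replicate n True) \<and> \<not> g x ! length x)
               + 1/2 * prob_unif n (\<lambda>y. nd_accepts A1 (y @ replicate n True))"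
    let ?L2 = "\<lambda>n. prob_unif n (\<lambda>x. cond_accepts A2 (take (length x) (g x) @ replicate n True) \<and> g x ! length x)
               + 1/2 * prob_unif n (\<lambda>y. \<not> cond_accepts A2 (y @ replicate n True))"
    have d1: "prob_unif (Suc n) (nd_accepts (fam1 A1)) - prob_unif n (\<lambda>x. nd_accepts (fam1 A1) (g x))
          = ?L1 n - 1/2" for n
    proof -
      have u: "prob_unif (Suc n) (nd_accepts (fam1 A1)) = 1/2 + 1/2 * prob_unif n (\<lambda>y. nd_accepts A1 (y @ replicate n True))"
        by (rule probU[where cz = True]) (simp add: fam1_acc)
      have v: "prob_unif n (\<lambda>x. nd_accepts (fam1 A1) (g x)) =
          1 - prob_unif n (\<lambda>x. \<not> nd_accepts A1 (take (length x) (g x) @ replicate n True) \<and> \<not> g x ! length x)"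
      proof (rule probG)
        fix x :: "bool list" assume lx: "length x = n"
        have "nd_accepts (fam1 A1) (g x) = nd_accepts (fam1 A1) (take (length x) (g x) @ [g x ! length x])"
          using gsplit[of x] by simp
        also have "\<dots> \<longleftrightarrow> nd_accepts A1 (take (length x) (g x) @ replicate n True) \<or> g x ! length x"
          by (simp add: fam1_acc ltake lx len)
        finally show "nd_accepts (fam1 A1) (g x) \<longleftrightarrow>
            \<not> (\<not> nd_accepts A1 (take (length x) (g x) @ replicate n True) \<and> \<not> g x ! length x)" by simp
      qed
      show ?thesis unfolding u v by simp
    qed
    have d2: "prob_unif (Suc n) (nd_accepts (fam2 A2)) - prob_unif n (\<lambda>x. nd_accepts (fam2 A2) (g x))
          = ?L2 n - 1/2" for n
    proof -
      have u: "prob_unif (Suc n) (nd_accepts (fam2 A2)) = 1/2 + 1/2 * prob_unif n (\<lambda>y. \<not> cond_accepts A2 (y @ replicate n True))"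
        by (rule probU[where cz = False]) (simp add: fam2_acc)
      have v: "prob_unif n (\<lambda>x. nd_accepts (fam2 A2) (g x)) =
          1 - prob_unif n (\<lambda>x. cond_accepts A2 (take (length x) (g x) @ replicate n True) \<and> g x ! length x)"
      proof (rule probG)
        fix x :: "bool list" assume lx: "length x = n"
        have "nd_accepts (fam2 A2) (g x) = nd_accepts (fam2 A2) (take (length x) (g x) @ [g x ! length x])"
          using gsplit[of x] by simp
        also have "\<dots> \<longleftrightarrow> \<not> cond_accepts A2 (take (length x) (g x) @ replicate n True) \<or> \<not> g x ! length x"
          by (simp add: fam2_acc ltake lx len)
        finally show "nd_accepts (fam2 A2) (g x) \<longleftrightarrow>
            \<not> (cond_accepts A2 (take (length x) (g x) @ replicate n True) \<and> g x ! length x)" by simp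
      qed
      show ?thesis unfolding u v by simp
    qed
    have e1: "\<forall>\<^sub>F n in sequentially. \<not> (?L1 n \<ge> 1/2 + 1 / real (poly p n))"
      using sb[OF fam1_size[OF A1] p] by eventually_elim (simp add: d1)
    have e2: "\<forall>\<^sub>F n in sequentially. \<not> (?L2 n \<ge> 1/2 + 1 / real (poly p n))"
      using sb[OF fam2_size[OF A2] p] by eventually_elim (simp add: d2)
    have "\<forall>\<^sub>F n in sequentially. \<not> (?L1 n \<ge> 1/2 + 1 / real (poly p n) \<or> ?L2 n \<ge> 1/2 + 1 / real (poly p n))"
      using e1 e2 by eventually_elim blast
    then show False using fr unfolding frequently_def by blast
  qed
  show ?thesis unfolding super_core_def using pf pb nc by blast
qed

end
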